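(* Let $f:\mathbb{R}^d\to\mathbb{R}$ be a convex differentiable function whose gradient is $L$-Lipschitz, with minimizer $x^*$. Consider iterates $x_{t+1}=x_t-\gamma_t\bar g_t$ where $\bar g_t$ is a stochastic gradient at $x_t$, $g_t=\nabla f(x_t)$, and $\epsilon_t=\bar g_t-g_t$ has mean zero conditionally on the history $x_0,\dots,x_t$, with $\sigma_t^2=\mathbb{E}[|\epsilon_t|^2]$ and $\eta_t^4=\mathbb{E}[|\epsilon_t|^4]$; let $\bar\sigma^2=\frac1T\sum_t\sigma_t^2$ and $\bar\eta^4=\frac1T\sum_t\eta_t^4$ (assumed finite). Assume $0<\gamma_t\le\frac1L$ for all $t$, $|x_t-x^*|^2\le M^2$ for all $t$, and that the distribution of $\epsilon_t$ is symmetric for every $t$. Define $$S_T=\frac{1}{\gamma_T T}\cdot\frac{M^2}{2}+\frac{1}{2T}\sum_{t=1}^T\gamma_t\big(1+L\gamma_t\big)|\epsilon_t|^2-\frac1T\sum_{t=1}^T\epsilon_t\cdot\big(x_t-L\gamma_t^2g_t-x^*\big).$$ Then $$\mathrm{Var}(S_T)\le\frac1T\Big[4M^2\bar\sigma^2+\frac{\bar\eta^4}{L^2}\Big].$$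
   Context: $\bar g_t$ is the average of per-sample gradients over a randomly drawn mini-batch at $x_t$; the stochastic errors at different times are independent. Expectations and variances of $S_T$ are taken with respect to the stochastic errors $\epsilon_1,\dots,\epsilon_T$ (iterated, conditionally on the history). The quantity $S_T$ is an upper bound for the averaged loss $\frac1T\sum_{t=1}^T[f(x_t)-f(x^* )]$. *)

theory Defs
  imports "HOL-Probability.Probability"
begin

definition hist :: "'a measure \<Rightarrow> (nat \<Rightarrow> 'a \<Rightarrow> 'e::euclidean_space) \<Rightarrow> nat \<Rightarrow> 'a measure" where
  "hist P x t = sigma (space P) {x s -` B \<inter> space P | s B. s \<le> t \<and> B \<in> sets borel}"

end

theory Submission imports Defs begin

primrec Fseq :: "'e \<Rightarrow> (nat \<Rightarrow> real) \<Rightarrow> ('e \<Rightarrow> 'e) \<Rightarrow> nat \<Rightarrow> (nat \<Rightarrow> 'e) \<Rightarrow> 'e::real_vector" where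
  "Fseq x0 g gr 0 e = x0"
| "Fseq x0 g gr (Suc t) e = Fseq x0 g gr t e - g t *\<^sub>R (gr (Fseq x0 g gr t e) + e t)"

lemma Fseq_cong: "(\<And>j. j < t \<Longrightarrow> e j = e' j) \<Longrightarrow> Fseq x0 g gr t e = Fseq x0 g gr t e'"
  by (induction t) auto

lemma Fseq_meas:
  fixes gr :: "'e::euclidean_space \<Rightarrow> 'e"
  assumes gr: "gr \<in> borel_measurable borel" and J: "{..<t} \<subseteq> J"
  shows "Fseq x0 g gr t \<in> borel_measurable (PiM J (\<lambda>_. borel))"
  using J
proof (induction t)
  case 0 then show ?case by simp
next
  case (Suc t)
  then have tJ: "t \<in> J" and J': "{..<t} \<subseteq> J" by auto
  have m: "Fseq x0 g gr t \<in> borel_measurable (PiM J (\<lambda>_. borel))" using Suc.IH J' by blast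
  have "(\<lambda>f. gr (Fseq x0 g gr t f)) \<in> borel_measurable (PiM J (\<lambda>_. borel))"
    by (rule measurable_compose[OF m gr])
  moreover have "(\<lambda>f. f t) \<in> borel_measurable (PiM J (\<lambda>_. borel))"
    using tJ by (rule measurable_component_singleton)
  ultimately show ?case using m
    by (simp, intro borel_measurable_diff borel_measurable_scaleR borel_measurable_add) auto
qed

context prob_space begin

lemma indep_prod_real:
  fixes g :: "'e::euclidean_space \<Rightarrow> real" and h :: "('i \<Rightarrow> 'e) \<Rightarrow> real"
  assumes ind: "indep_vars (\<lambda>_. borel) \<epsilon> UNIV" and kJ: "k \<notin> J"
    and g: "g \<in> borel_measurable borel" and h: "h \<in> borel_measurable (PiM J (\<lambda>_. borel))"
    and ig: "integrable M (\<lambda>\<omega>. g (\<epsilon> k \<omega>))" and ih: "integrable M (\<lambda>\<omega>. h (restrict (\<lambda>j. \<epsilon> j \<omega>) J))"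
  shows "(\<integral>\<omega>. g (\<epsilon> k \<omega>) * h (restrict (\<lambda>j. \<epsilon> j \<omega>) J) \<partial>M) = (\<integral>\<omega>. g (\<epsilon> k \<omega>) \<partial>M) * (\<integral>\<omega>. h (restrict (\<lambda>j. \<epsilon> j \<omega>) J) \<partial>M)"
    and "integrable M (\<lambda>\<omega>. g (\<epsilon> k \<omega>) * h (restrict (\<lambda>j. \<epsilon> j \<omega>) J))"
proof -
  have "indep_var (PiM {k} (\<lambda>_. borel)) (\<lambda>\<omega>. restrict (\<lambda>i. \<epsilon> i \<omega>) {k}) (PiM J (\<lambda>_. borel)) (\<lambda>\<omega>. restrict (\<lambda>i. \<epsilon> i \<omega>) J)"
    using kJ by (intro indep_var_restrict[OF ind]) auto
  then have "indep_var borel ((\<lambda>f. g (f k)) \<circ> (\<lambda>\<omega>. restrict (\<lambda>i. \<epsilon> i \<omega>) {k})) borel (h \<circ> (\<lambda>\<omega>. restrict (\<lambda>i. \<epsilon> i \<omega>) J))"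
  proof (rule indep_var_compose)
    show "(\<lambda>f. g (f k)) \<in> borel_measurable (PiM {k} (\<lambda>_. borel))"
      by (rule measurable_compose[OF _ g]) (rule measurable_component_singleton, simp)
  qed (rule h)
  then have I: "indep_var borel (\<lambda>\<omega>. g (\<epsilon> k \<omega>)) borel (\<lambda>\<omega>. h (restrict (\<lambda>j. \<epsilon> j \<omega>) J))"
    by (simp add: comp_def)
  show "(\<integral>\<omega>. g (\<epsilon> k \<omega>) * h (restrict (\<lambda>j. \<epsilon> j \<omega>) J) \<partial>M) = (\<integral>\<omega>. g (\<epsilon> k \<omega>) \<partial>M) * (\<integral>\<omega>. h (restrict (\<lambda>j. \<epsilon> j \<omega>) J) \<partial>M)"
    by (rule indep_var_lebesgue_integral[OF I ig ih])
  show "integrable M (\<lambda>\<omega>. g (\<epsilon> k \<omega>) * h (restrict (\<lambda>j. \<epsilon> j \<omega>) J))"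
    by (rule indep_var_integrable[OF I ig ih])
qed

lemma indep_inner:
  fixes g :: "'e::euclidean_space \<Rightarrow> 'e" and h :: "('i \<Rightarrow> 'e) \<Rightarrow> 'e"
  assumes ind: "indep_vars (\<lambda>_. borel) \<epsilon> UNIV" and kJ: "k \<notin> J"
    and g: "g \<in> borel_measurable borel" and h: "h \<in> borel_measurable (PiM J (\<lambda>_. borel))"
    and ig: "integrable M (\<lambda>\<omega>. g (\<epsilon> k \<omega>))" and ih: "integrable M (\<lambda>\<omega>. h (restrict (\<lambda>j. \<epsilon> j \<omega>) J))"
  shows "(\<integral>\<omega>. g (\<epsilon> k \<omega>) \<bullet> h (restrict (\<lambda>j. \<epsilon> j \<omega>) J) \<partial>M) = (\<integral>\<omega>. g (\<epsilon> k \<omega>) \<partial>M) \<bullet> (\<integral>\<omega>. h (restrict (\<lambda>j. \<epsilon> j \<omega>) J) \<partial>M)"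
proof -
  let ?G = "\<lambda>\<omega>. g (\<epsilon> k \<omega>)" and ?H = "\<lambda>\<omega>. h (restrict (\<lambda>j. \<epsilon> j \<omega>) J)"
  have b: "(\<integral>\<omega>. (?G \<omega> \<bullet> b) * (?H \<omega> \<bullet> b) \<partial>M) = (\<integral>\<omega>. ?G \<omega> \<bullet> b \<partial>M) * (\<integral>\<omega>. ?H \<omega> \<bullet> b \<partial>M)"
     "integrable M (\<lambda>\<omega>. (?G \<omega> \<bullet> b) * (?H \<omega> \<bullet> b))" for b
    using indep_prod_real[OF ind kJ, of "\<lambda>e. g e \<bullet> b" "\<lambda>f. h f \<bullet> b"] g h ig ih by auto
  have "(\<integral>\<omega>. ?G \<omega> \<bullet> ?H \<omega> \<partial>M) = (\<integral>\<omega>. (\<Sum>b\<in>Basis. (?G \<omega> \<bullet> b) * (?H \<omega> \<bullet> b)) \<partial>M)"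
    by (subst euclidean_inner) simp
  also have "\<dots> = (\<Sum>b\<in>Basis. (\<integral>\<omega>. (?G \<omega> \<bullet> b) * (?H \<omega> \<bullet> b) \<partial>M))"
    by (rule Bochner_Integration.integral_sum) (rule b(2))
  also have "\<dots> = (\<Sum>b\<in>Basis. (integral\<^sup>L M ?G \<bullet> b) * (integral\<^sup>L M ?H \<bullet> b))"
    using b ig ih by simp
  also have "\<dots> = integral\<^sup>L M ?G \<bullet> integral\<^sup>L M ?H"
    by (subst euclidean_inner[of "integral\<^sup>L M ?G"]) simp
  finally show ?thesis .
qed

lemma sym_zero:
  fixes X :: "'a \<Rightarrow> 'e::euclidean_space" and g :: "'e \<Rightarrow> 'e"
  assumes X: "X \<in> borel_measurable M" and g: "g \<in> borel_measurable borel"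
    and sym: "distr M borel X = distr M borel (\<lambda>\<omega>. - X \<omega>)"
    and odd: "\<And>e. g (- e) = - g e"
  shows "(\<integral>\<omega>. g (X \<omega>) \<partial>M) = 0"
proof -
  have "(\<integral>\<omega>. g (X \<omega>) \<partial>M) = (\<integral>e. g e \<partial>distr M borel X)"
    using X g by (simp add: integral_distr)
  also have "\<dots> = (\<integral>e. g e \<partial>distr M borel (\<lambda>\<omega>. - X \<omega>))" using sym by simp
  also have "\<dots> = (\<integral>\<omega>. g (- X \<omega>) \<partial>M)"
    using X g by (simp add: integral_distr)
  also have "\<dots> = - (\<integral>\<omega>. g (X \<omega>) \<partial>M)" by (simp add: odd)
  finally have "2 *\<^sub>R (\<integral>\<omega>. g (X \<omega>) \<partial>M) = 0"
    by (metis add.inverse_inverse add.right_inverse scaleR_2)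
  then show ?thesis by simp
qed

end

lemma pb1: "(a::real) \<ge> 0 \<Longrightarrow> b \<ge> 0 \<Longrightarrow> a^2 * b^2 \<le> a^4 + b^4"
proof -
  assume "a \<ge> 0" "b \<ge> 0"
  have "2 * a^2 * b^2 \<le> (a^2)^2 + (b^2)^2" by (rule sum_squares_bound)
  moreover have "(a^2)^2 = a^4" "(b^2)^2 = b^4" by (simp_all flip: power_mult)
  moreover have "0 \<le> a^2 * b^2" by simp
  ultimately show ?thesis by linarith
qed
lemma pb2: "(a::real) \<ge> 0 \<Longrightarrow> b \<ge> 0 \<Longrightarrow> a^2 * b \<le> a^4 + b^2"
proof -
  assume "a \<ge> 0" "b \<ge> 0"
  have "2 * a^2 * b \<le> (a^2)^2 + b^2" by (rule sum_squares_bound)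
  moreover have "(a^2)^2 = a^4" by (simp flip: power_mult)
  moreover have "0 \<le> a^2 * b" using \<open>b \<ge> 0\<close> by simp
  ultimately show ?thesis by linarith
qed
lemma pb3: "(a::real) \<ge> 0 \<Longrightarrow> b \<ge> 0 \<Longrightarrow> a * b \<le> a^2 + b^2"
proof -
  assume "a \<ge> 0" "b \<ge> 0"
  have "2 * a * b \<le> a^2 + b^2" by (rule sum_squares_bound)
  moreover have "0 \<le> a * b" using \<open>a \<ge> 0\<close> \<open>b \<ge> 0\<close> by simp
  ultimately show ?thesis by linarith
qed
lemma pb4: "(a::real) \<ge> 0 \<Longrightarrow> a \<le> 1 + a^4 \<and> a^2 \<le> 1 + a^4 \<and> a^3 \<le> 1 + a^4"
proof -
  assume a: "a \<ge> 0"
  have "a^k \<le> 1 + a^4" if "k \<le> 4" for k :: nat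
  proof (cases "a \<le> 1")
    case True
    then have "a^k \<le> 1" using a by (intro power_le_one) auto
    then show ?thesis using a by (smt (verit) zero_le_power)
  next
    case False
    then have "a^k \<le> a^4" using that by (intro power_increasing) auto
    then show ?thesis by simp
  qed
  from this[of 1] this[of 2] this[of 3] show ?thesis by simp
qed

lemma ib: "integrable M F \<Longrightarrow> G \<in> borel_measurable M \<Longrightarrow> (\<And>\<omega>. \<omega> \<in> space M \<Longrightarrow> norm (G \<omega>) \<le> F \<omega>)
   \<Longrightarrow> integrable M (G :: _ \<Rightarrow> 'b::{banach,second_countable_topology})"
proof -
  assume F: "integrable M F" and G: "G \<in> borel_measurable M" and b: "\<And>\<omega>. \<omega> \<in> space M \<Longrightarrow> norm (G \<omega>) \<le> F \<omega>"
  have "AE \<omega> in M. norm (G \<omega>) \<le> norm (F \<omega>)"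
  proof (rule AE_I2)
    fix \<omega> assume "\<omega> \<in> space M"
    then have "norm (G \<omega>) \<le> F \<omega>" by (rule b)
    also have "F \<omega> \<le> norm (F \<omega>)" by simp
    finally show "norm (G \<omega>) \<le> norm (F \<omega>)" .
  qed
  then show ?thesis by (rule Bochner_Integration.integrable_bound[OF F G])
qed

theorem theorem2:
  fixes P :: "'a measure"
    and f :: "'e::euclidean_space \<Rightarrow> real" and grad :: "'e \<Rightarrow> 'e"
    and L M :: real and xs x0 :: 'e
    and \<gamma> :: "nat \<Rightarrow> real"
    and x \<epsilon> :: "nat \<Rightarrow> 'a \<Rightarrow> 'e"
    and T :: nat
  assumes prob: "prob_space P"
    and convex: "convex_on UNIV f"
    and grad: "\<And>y. (f has_derivative (\<lambda>h. grad y \<bullet> h)) (at y)"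
    and L_pos: "L > 0"
    and lip: "\<And>y z. norm (grad y - grad z) \<le> L * norm (y - z)"
    and minimizer: "\<And>y. f xs \<le> f y"
    and T_pos: "T \<ge> 1"
    and step: "\<And>t. 0 < \<gamma> t \<and> \<gamma> t \<le> 1 / L"
    and init: "\<And>\<omega>. \<omega> \<in> space P \<Longrightarrow> x 0 \<omega> = x0"
    and iter: "\<And>t \<omega>. \<omega> \<in> space P \<Longrightarrow> x (Suc t) \<omega> = x t \<omega> - \<gamma> t *\<^sub>R (grad (x t \<omega>) + \<epsilon> t \<omega>)"
    and eps_meas: "\<And>t. \<epsilon> t \<in> borel_measurable P"
    and eps_int4: "\<And>t. integrable P (\<lambda>\<omega>. norm (\<epsilon> t \<omega>) ^ 4)"
    and eps_indep: "prob_space.indep_vars P (\<lambda>_. borel) \<epsilon> UNIV"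
    and eps_cond_mean: "\<And>t u. AE \<omega> in P. real_cond_exp P (hist P x t) (\<lambda>\<omega>. \<epsilon> t \<omega> \<bullet> u) \<omega> = 0"
    and eps_sym: "\<And>t. distr P borel (\<epsilon> t) = distr P borel (\<lambda>\<omega>. - \<epsilon> t \<omega>)"
    and bounded: "\<And>t \<omega>. \<omega> \<in> space P \<Longrightarrow> norm (x t \<omega> - xs) ^ 2 \<le> M ^ 2"
  shows "prob_space.variance P
           (\<lambda>\<omega>. M ^ 2 / (2 * \<gamma> T * real T)
              + 1 / (2 * real T) * (\<Sum>t=1..T. \<gamma> t * (1 + L * \<gamma> t) * norm (\<epsilon> t \<omega>) ^ 2)
              - 1 / real T * (\<Sum>t=1..T. \<epsilon> t \<omega> \<bullet> (x t \<omega> - (L * \<gamma> t ^ 2) *\<^sub>R grad (x t \<omega>) - xs)))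
         \<le> 1 / real T * (4 * M ^ 2 * (1 / real T * (\<Sum>t=1..T. prob_space.expectation P (\<lambda>\<omega>. norm (\<epsilon> t \<omega>) ^ 2)))
              + (1 / real T * (\<Sum>t=1..T. prob_space.expectation P (\<lambda>\<omega>. norm (\<epsilon> t \<omega>) ^ 4))) / L ^ 2)"
proof -
  interpret prob_space P by (rule prob)
  define R where "R = \<bar>M\<bar>"
  have R0: "R \<ge> 0" by (simp add: R_def)
  have "L-lipschitz_on UNIV grad"
    by (rule lipschitz_onI) (use lip L_pos in \<open>auto simp: dist_norm\<close>)
  then have gradm: "grad \<in> borel_measurable borel"
    by (intro borel_measurable_continuous_onI lipschitz_on_continuous_on)
  have "(\<lambda>h. grad xs \<bullet> h) = (\<lambda>h. 0)"
    by (rule has_derivative_local_min[OF grad]) (auto intro: always_eventually minimizer)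
  then have gxs: "grad xs = 0" by (metis inner_eq_zero_iff)
  have xF: "x t \<omega> = Fseq x0 \<gamma> grad t (\<lambda>j. \<epsilon> j \<omega>)" if "\<omega> \<in> space P" for t \<omega>
    by (induction t) (use that init iter in auto)
  define V where "V t f = Fseq x0 \<gamma> grad t f - (L * \<gamma> t ^ 2) *\<^sub>R grad (Fseq x0 \<gamma> grad t f) - xs" for t f
  have Vm: "V t \<in> borel_measurable (PiM J (\<lambda>_. borel))" if "{..<t} \<subseteq> J" for t and J :: "nat set"
  proof -
    have m: "Fseq x0 \<gamma> grad t \<in> borel_measurable (PiM J (\<lambda>_. borel))"
      by (rule Fseq_meas[OF gradm that])
    have "(\<lambda>f. grad (Fseq x0 \<gamma> grad t f)) \<in> borel_measurable (PiM J (\<lambda>_. borel))"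
      by (rule measurable_compose[OF m gradm])
    then show ?thesis using m unfolding V_def
      by (intro borel_measurable_diff borel_measurable_scaleR) auto
  qed
  define v where "v t \<omega> = x t \<omega> - (L * \<gamma> t ^ 2) *\<^sub>R grad (x t \<omega>) - xs" for t \<omega>
  have vV: "v t \<omega> = V t (restrict (\<lambda>j. \<epsilon> j \<omega>) J)" if "\<omega> \<in> space P" "{..<t} \<subseteq> J" for t \<omega> J
  proof -
    have "Fseq x0 \<gamma> grad t (\<lambda>j. \<epsilon> j \<omega>) = Fseq x0 \<gamma> grad t (restrict (\<lambda>j. \<epsilon> j \<omega>) J)"
      by (rule Fseq_cong) (use that(2) in auto)
    then show ?thesis unfolding v_def V_def xF[OF that(1)] by simp
  qed
  have Rvm: "(\<lambda>\<omega>. restrict (\<lambda>j. \<epsilon> j \<omega>) J) \<in> measurable P (PiM J (\<lambda>_. borel))" for J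
    by (rule measurable_restrict) (rule eps_meas)
  have vm: "v t \<in> borel_measurable P" for t
  proof -
    have "(\<lambda>\<omega>. V t (restrict (\<lambda>j. \<epsilon> j \<omega>) UNIV)) \<in> borel_measurable P"
      by (rule measurable_compose[OF Rvm Vm]) simp
    then show ?thesis by (subst measurable_cong[OF vV]) auto
  qed
  have vb: "norm (v t \<omega>) \<le> 2 * R" if "\<omega> \<in> space P" for t \<omega>
  proof -
    have "norm (x t \<omega> - xs)^2 \<le> R^2" using bounded[OF that, of t] unfolding R_def by (simp only: power2_abs)
    from power2_le_imp_le[OF this R0] have d: "norm (x t \<omega> - xs) \<le> R" .
    have "norm (grad (x t \<omega>)) \<le> L * norm (x t \<omega> - xs)" using lip[of "x t \<omega>" xs] gxs by simp
    also have "\<dots> \<le> L * R" using d L_pos by (intro mult_left_mono) auto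
    finally have g: "norm (grad (x t \<omega>)) \<le> L * R" .
    have "L * \<gamma> t \<le> 1" "\<gamma> t > 0" using step[of t] L_pos by (auto simp: field_simps)
    then have "(L * \<gamma> t)^2 \<le> 1" using L_pos by (intro power_le_one) auto
    moreover have "L * \<gamma> t ^ 2 * L = (L * \<gamma> t)^2" by (simp add: power2_eq_square)
    ultimately have c: "L * \<gamma> t ^ 2 * L \<le> 1" by simp
    have ve: "v t \<omega> = (x t \<omega> - xs) - (L * \<gamma> t ^ 2) *\<^sub>R grad (x t \<omega>)"
      unfolding v_def by (simp add: algebra_simps)
    have "norm (v t \<omega>) \<le> norm (x t \<omega> - xs) + norm ((L * \<gamma> t ^ 2) *\<^sub>R grad (x t \<omega>))"
      unfolding ve by (rule norm_triangle_ineq4)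
    also have "norm ((L * \<gamma> t ^ 2) *\<^sub>R grad (x t \<omega>)) = (L * \<gamma> t ^ 2) * norm (grad (x t \<omega>))"
      using L_pos by simp
    also have "\<dots> \<le> (L * \<gamma> t ^ 2) * (L * R)"
      using g L_pos by (intro mult_left_mono) auto
    also have "(L * \<gamma> t ^ 2) * (L * R) = (L * \<gamma> t ^ 2 * L) * R" by simp
    also have "\<dots> \<le> 1 * R" using c R0 by (intro mult_right_mono) auto
    finally show ?thesis using d by linarith
  qed
  note [measurable] = eps_meas vm
  define N where "N t = (\<lambda>\<omega>. norm (\<epsilon> t \<omega>))" for t
  define Y where "Y t = (\<lambda>\<omega>. norm (\<epsilon> t \<omega>)^2)" for t
  define Q where "Q t = (\<lambda>\<omega>. norm (\<epsilon> t \<omega>)^4)" for t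
  define W where "W t = (\<lambda>\<omega>. \<epsilon> t \<omega> \<bullet> v t \<omega>)" for t
  have Nm[measurable]: "N t \<in> borel_measurable P" for t unfolding N_def by measurable
  have Ym[measurable]: "Y t \<in> borel_measurable P" for t unfolding Y_def by measurable
  have Qm[measurable]: "Q t \<in> borel_measurable P" for t unfolding Q_def by measurable
  have Wm[measurable]: "W t \<in> borel_measurable P" for t unfolding W_def by measurable
  have N0: "N t \<omega> \<ge> 0" for t \<omega> by (simp add: N_def)
  have YN: "Y t \<omega> = N t \<omega> ^ 2" for t \<omega> by (simp add: N_def Y_def)
  have QN: "Q t \<omega> = N t \<omega> ^ 4" for t \<omega> by (simp add: N_def Q_def)
  have iQ: "integrable P (Q t)" for t unfolding Q_def by (rule eps_int4)
  have i1: "integrable P (\<lambda>\<omega>. 1 + Q t \<omega>)" for t using iQ[of t] by simp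
  have iN: "integrable P (N t)" for t
    by (rule ib[OF i1[of t]]) (use pb4[OF N0[of t]] N0[of t] in \<open>auto simp: QN\<close>)
  have iY: "integrable P (Y t)" for t
    by (rule ib[OF i1[of t]]) (use pb4[OF N0[of t]] in \<open>auto simp: QN YN\<close>)
  have iE: "integrable P (\<epsilon> t)" for t
    by (rule ib[OF iN]) (auto simp: N_def)
  have iC: "integrable P (\<lambda>\<omega>. Y t \<omega> *\<^sub>R \<epsilon> t \<omega>)" for t
  proof (rule ib[OF i1[of t]])
    fix \<omega>
    have "norm (Y t \<omega> *\<^sub>R \<epsilon> t \<omega>) = N t \<omega> ^ 3"
      by (simp add: YN N_def power3_eq_cube power2_eq_square)
    then show "norm (Y t \<omega> *\<^sub>R \<epsilon> t \<omega>) \<le> 1 + Q t \<omega>" using pb4[OF N0[of t \<omega>]] by (simp add: QN)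
  qed measurable
  have Wb: "\<bar>W t \<omega>\<bar> \<le> 2 * R * N t \<omega>" if "\<omega> \<in> space P" for t \<omega>
  proof -
    have "\<bar>W t \<omega>\<bar> \<le> norm (\<epsilon> t \<omega>) * norm (v t \<omega>)" unfolding W_def by (rule Cauchy_Schwarz_ineq2)
    also have "\<dots> \<le> N t \<omega> * (2 * R)" unfolding N_def by (intro mult_left_mono vb that) auto
    finally show ?thesis by (simp add: mult.commute)
  qed
  have iW: "integrable P (W t)" for t
    by (rule ib[of _ "\<lambda>\<omega>. 2 * R * N t \<omega>"]) (use iN Wb in auto)
  have iYY: "integrable P (\<lambda>\<omega>. Y t \<omega> * Y s \<omega>)" for t s
  proof (rule ib[of _ "\<lambda>\<omega>. Q t \<omega> + Q s \<omega>"])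
    fix \<omega>
    show "norm (Y t \<omega> * Y s \<omega>) \<le> Q t \<omega> + Q s \<omega>"
      using pb1[OF N0 N0, of t \<omega> s \<omega>] by (simp add: YN QN)
  qed (use iQ in auto)
  have iYW: "integrable P (\<lambda>\<omega>. Y t \<omega> * W s \<omega>)" for t s
  proof (rule ib[of _ "\<lambda>\<omega>. 2 * R * (Q t \<omega> + Y s \<omega>)"])
    fix \<omega> assume \<omega>: "\<omega> \<in> space P"
    have "norm (Y t \<omega> * W s \<omega>) = N t \<omega> ^ 2 * \<bar>W s \<omega>\<bar>" by (simp add: YN abs_mult)
    also have "\<dots> \<le> N t \<omega> ^ 2 * (2 * R * N s \<omega>)" by (intro mult_left_mono Wb \<omega>) auto
    also have "\<dots> = 2 * R * (N t \<omega> ^ 2 * N s \<omega>)" by (simp add: algebra_simps)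
    also have "\<dots> \<le> 2 * R * (Q t \<omega> + Y s \<omega>)"
      using pb2[OF N0 N0, of t \<omega> s \<omega>] R0 by (intro mult_left_mono) (auto simp: QN YN)
    finally show "norm (Y t \<omega> * W s \<omega>) \<le> 2 * R * (Q t \<omega> + Y s \<omega>)" .
  qed (use iQ iY in auto)
  have iWW: "integrable P (\<lambda>\<omega>. W t \<omega> * W s \<omega>)" for t s
  proof (rule ib[of _ "\<lambda>\<omega>. 4 * R^2 * (Y t \<omega> + Y s \<omega>)"])
    fix \<omega> assume \<omega>: "\<omega> \<in> space P"
    have "norm (W t \<omega> * W s \<omega>) = \<bar>W t \<omega>\<bar> * \<bar>W s \<omega>\<bar>" by (simp add: abs_mult)
    also have "\<dots> \<le> (2 * R * N t \<omega>) * (2 * R * N s \<omega>)"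
      by (intro mult_mono Wb \<omega>) (auto simp: R0 N0)
    also have "\<dots> = 4 * R^2 * (N t \<omega> * N s \<omega>)" by (simp add: algebra_simps power2_eq_square)
    also have "\<dots> \<le> 4 * R^2 * (Y t \<omega> + Y s \<omega>)"
      using pb3[OF N0 N0, of t \<omega> s \<omega>] by (intro mult_left_mono) (auto simp: YN)
    finally show "norm (W t \<omega> * W s \<omega>) \<le> 4 * R^2 * (Y t \<omega> + Y s \<omega>)" .
  qed (use iY in auto)
  define Rs where "Rs J = (\<lambda>\<omega>. restrict (\<lambda>j. \<epsilon> j \<omega>) J)" for J :: "nat set"
  have Rsm: "Rs J \<in> measurable P (PiM J (\<lambda>_. borel))" for J unfolding Rs_def by (rule Rvm)
  have RsV: "V t (Rs J \<omega>) = v t \<omega>" if "\<omega> \<in> space P" "{..<t} \<subseteq> J" for t J \<omega>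
    unfolding Rs_def using vV[OF that] by simp
  have Rsj: "Rs J \<omega> j = \<epsilon> j \<omega>" if "j \<in> J" for J j \<omega> unfolding Rs_def using that by simp
  have iV: "integrable P (\<lambda>\<omega>. V t (Rs J \<omega>))" if "{..<t} \<subseteq> J" for t J
  proof (rule ib[of _ "\<lambda>_. 2 * R"])
    show "(\<lambda>\<omega>. V t (Rs J \<omega>)) \<in> borel_measurable P"
      by (rule measurable_compose[OF Rsm Vm[OF that]])
    fix \<omega> assume "\<omega> \<in> space P"
    then show "norm (V t (Rs J \<omega>)) \<le> 2 * R" using RsV[OF _ that] vb by simp
  qed simp
  have mean0: "(\<integral>\<omega>. \<epsilon> t \<omega> \<partial>P) = 0" for t
    using sym_zero[of "\<epsilon> t" "\<lambda>e. e", OF eps_meas _ eps_sym] by simp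
  have meanC: "(\<integral>\<omega>. norm (\<epsilon> t \<omega>)^2 *\<^sub>R \<epsilon> t \<omega> \<partial>P) = 0" for t
    using sym_zero[of "\<epsilon> t" "\<lambda>e. norm e^2 *\<^sub>R e", OF eps_meas _ eps_sym] by simp
  have EW: "(\<integral>\<omega>. W t \<omega> \<partial>P) = 0" for t
  proof -
    have "(\<integral>\<omega>. W t \<omega> \<partial>P) = (\<integral>\<omega>. (\<lambda>e. e) (\<epsilon> t \<omega>) \<bullet> V t (restrict (\<lambda>j. \<epsilon> j \<omega>) {..<t}) \<partial>P)"
      by (rule Bochner_Integration.integral_cong) (auto simp: W_def RsV[unfolded Rs_def])
    also have "\<dots> = (\<integral>\<omega>. \<epsilon> t \<omega> \<partial>P) \<bullet> (\<integral>\<omega>. V t (restrict (\<lambda>j. \<epsilon> j \<omega>) {..<t}) \<partial>P)"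
      by (rule indep_inner[OF eps_indep _ _ Vm[of t "{..<t}"] iE iV[of t "{..<t}", unfolded Rs_def]]) auto
    finally show ?thesis by (simp add: mean0)
  qed
  have EWW: "(\<integral>\<omega>. W s \<omega> * W t \<omega> \<partial>P) = 0" if st: "s < t" for s t
  proof -
    define h where "h f = ((f s) \<bullet> V s f) *\<^sub>R V t f" for f :: "nat \<Rightarrow> 'e"
    have hm: "h \<in> borel_measurable (PiM {..<t} (\<lambda>_. borel))"
      unfolding h_def using st
      by (intro borel_measurable_scaleR borel_measurable_inner measurable_component_singleton Vm) auto
    have hv: "h (Rs {..<t} \<omega>) = W s \<omega> *\<^sub>R v t \<omega>" if "\<omega> \<in> space P" for \<omega>
      unfolding h_def W_def using st that by (simp add: Rsj RsV)
    have ih: "integrable P (\<lambda>\<omega>. h (Rs {..<t} \<omega>))"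
    proof (rule ib[of _ "\<lambda>\<omega>. 4 * R^2 * N s \<omega>"])
      show "(\<lambda>\<omega>. h (Rs {..<t} \<omega>)) \<in> borel_measurable P" by (rule measurable_compose[OF Rsm hm])
      fix \<omega> assume \<omega>: "\<omega> \<in> space P"
      have "norm (h (Rs {..<t} \<omega>)) = \<bar>W s \<omega>\<bar> * norm (v t \<omega>)" using hv[OF \<omega>] by simp
      also have "\<dots> \<le> (2 * R * N s \<omega>) * (2 * R)"
        by (intro mult_mono Wb vb \<omega>) (auto simp: R0 N0)
      also have "\<dots> = 4 * R^2 * N s \<omega>" by (simp add: power2_eq_square)
      finally show "norm (h (Rs {..<t} \<omega>)) \<le> 4 * R^2 * N s \<omega>" .
    qed (use iN in simp)
    have "(\<integral>\<omega>. W s \<omega> * W t \<omega> \<partial>P) = (\<integral>\<omega>. (\<lambda>e. e) (\<epsilon> t \<omega>) \<bullet> h (restrict (\<lambda>j. \<epsilon> j \<omega>) {..<t}) \<partial>P)"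
      by (rule Bochner_Integration.integral_cong) (auto simp: W_def hv[unfolded Rs_def])
    also have "\<dots> = (\<integral>\<omega>. \<epsilon> t \<omega> \<partial>P) \<bullet> (\<integral>\<omega>. h (restrict (\<lambda>j. \<epsilon> j \<omega>) {..<t}) \<partial>P)"
      by (rule indep_inner[OF eps_indep _ _ hm iE ih[unfolded Rs_def]]) auto
    finally show ?thesis by (simp add: mean0)
  qed
  have EYW1: "(\<integral>\<omega>. Y t \<omega> * W s \<omega> \<partial>P) = 0" if ts: "t \<noteq> s" for t s
  proof -
    define J where "J = insert t {..<s}"
    define h where "h f = norm (f t)^2 *\<^sub>R V s f" for f :: "nat \<Rightarrow> 'e"
    have sJ: "s \<notin> J" "{..<s} \<subseteq> J" "t \<in> J" using ts by (auto simp: J_def)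
    have hm: "h \<in> borel_measurable (PiM J (\<lambda>_. borel))"
      unfolding h_def using sJ
      by (intro borel_measurable_scaleR borel_measurable_power borel_measurable_norm measurable_component_singleton Vm) auto
    have hv: "h (Rs J \<omega>) = Y t \<omega> *\<^sub>R v s \<omega>" if "\<omega> \<in> space P" for \<omega>
      unfolding h_def Y_def using sJ that by (simp add: Rsj RsV)
    have ih: "integrable P (\<lambda>\<omega>. h (Rs J \<omega>))"
    proof (rule ib[of _ "\<lambda>\<omega>. 2 * R * Y t \<omega>"])
      show "(\<lambda>\<omega>. h (Rs J \<omega>)) \<in> borel_measurable P" by (rule measurable_compose[OF Rsm hm])
      fix \<omega> assume \<omega>: "\<omega> \<in> space P"
      have "norm (h (Rs J \<omega>)) = Y t \<omega> * norm (v s \<omega>)" using hv[OF \<omega>] by (simp add: YN)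
      also have "\<dots> \<le> Y t \<omega> * (2 * R)" by (intro mult_left_mono vb \<omega>) (auto simp: YN)
      finally show "norm (h (Rs J \<omega>)) \<le> 2 * R * Y t \<omega>" by (simp add: mult.commute)
    qed (use iY in simp)
    have "(\<integral>\<omega>. Y t \<omega> * W s \<omega> \<partial>P) = (\<integral>\<omega>. (\<lambda>e. e) (\<epsilon> s \<omega>) \<bullet> h (restrict (\<lambda>j. \<epsilon> j \<omega>) J) \<partial>P)"
      by (rule Bochner_Integration.integral_cong) (auto simp: W_def hv[unfolded Rs_def])
    also have "\<dots> = (\<integral>\<omega>. \<epsilon> s \<omega> \<partial>P) \<bullet> (\<integral>\<omega>. h (restrict (\<lambda>j. \<epsilon> j \<omega>) J) \<partial>P)"
      by (rule indep_inner[OF eps_indep sJ(1) _ hm iE ih[unfolded Rs_def]]) auto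
    finally show ?thesis by (simp add: mean0)
  qed
  have EYW2: "(\<integral>\<omega>. Y t \<omega> * W t \<omega> \<partial>P) = 0" for t
  proof -
    have "(\<integral>\<omega>. Y t \<omega> * W t \<omega> \<partial>P) = (\<integral>\<omega>. (\<lambda>e. norm e^2 *\<^sub>R e) (\<epsilon> t \<omega>) \<bullet> V t (restrict (\<lambda>j. \<epsilon> j \<omega>) {..<t}) \<partial>P)"
      by (rule Bochner_Integration.integral_cong) (auto simp: W_def Y_def RsV[unfolded Rs_def])
    also have "\<dots> = (\<integral>\<omega>. norm (\<epsilon> t \<omega>)^2 *\<^sub>R \<epsilon> t \<omega> \<partial>P) \<bullet> (\<integral>\<omega>. V t (restrict (\<lambda>j. \<epsilon> j \<omega>) {..<t}) \<partial>P)"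
      by (rule indep_inner[OF eps_indep _ _ Vm[of t "{..<t}"] iC[unfolded Y_def] iV[of t "{..<t}", unfolded Rs_def]]) auto
    finally show ?thesis by (simp add: meanC)
  qed
  have EYW: "(\<integral>\<omega>. Y t \<omega> * W s \<omega> \<partial>P) = 0" for t s
    using EYW1[of t s] EYW2[of t] by (cases "t = s") auto
  define m where "m t = (\<integral>\<omega>. Y t \<omega> \<partial>P)" for t
  have EYY: "(\<integral>\<omega>. Y t \<omega> * Y s \<omega> \<partial>P) = m t * m s" if ts: "t \<noteq> s" for t s
  proof -
    have "(\<integral>\<omega>. Y t \<omega> * Y s \<omega> \<partial>P) = (\<integral>\<omega>. (\<lambda>e. norm e^2) (\<epsilon> t \<omega>) * (\<lambda>f. norm (f s)^2) (restrict (\<lambda>j. \<epsilon> j \<omega>) {s}) \<partial>P)"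
      by (simp add: Y_def)
    also have "\<dots> = (\<integral>\<omega>. (\<lambda>e. norm e^2) (\<epsilon> t \<omega>) \<partial>P) * (\<integral>\<omega>. (\<lambda>f. norm (f s)^2) (restrict (\<lambda>j. \<epsilon> j \<omega>) {s}) \<partial>P)"
      by (rule indep_prod_real(1)[OF eps_indep]) (use ts iY in \<open>auto simp: Y_def\<close>)
    finally show ?thesis by (simp add: m_def Y_def)
  qed
  have EW2: "(\<integral>\<omega>. W t \<omega> * W t \<omega> \<partial>P) \<le> 4 * R^2 * m t" for t
  proof -
    have "(\<integral>\<omega>. W t \<omega> * W t \<omega> \<partial>P) \<le> (\<integral>\<omega>. 4 * R^2 * Y t \<omega> \<partial>P)"
    proof (rule integral_mono)
      fix \<omega> assume \<omega>: "\<omega> \<in> space P"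
      have "W t \<omega> * W t \<omega> = \<bar>W t \<omega>\<bar>^2" by (simp add: power2_eq_square)
      also have "\<dots> \<le> (2 * R * N t \<omega>)^2" by (rule power_mono[OF Wb[OF \<omega>]]) simp
      also have "\<dots> = 4 * R^2 * Y t \<omega>" by (simp add: YN power_mult_distrib)
      finally show "W t \<omega> * W t \<omega> \<le> 4 * R^2 * Y t \<omega>" .
    qed (use iWW iY in auto)
    then show ?thesis by (simp add: m_def)
  qed
  define a where "a t = \<gamma> t * (1 + L * \<gamma> t)" for t
  define \<tau> where "\<tau> = 1 / real T"
  define \<alpha> where "\<alpha> t = a t * \<tau> / 2" for t
  define c where "c = M ^ 2 / (2 * \<gamma> T * real T)"
  define I where "I = {1..T}"
  define S where "S = (\<lambda>\<omega>. M ^ 2 / (2 * \<gamma> T * real T)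
              + 1 / (2 * real T) * (\<Sum>t=1..T. \<gamma> t * (1 + L * \<gamma> t) * norm (\<epsilon> t \<omega>) ^ 2)
              - 1 / real T * (\<Sum>t=1..T. \<epsilon> t \<omega> \<bullet> (x t \<omega> - (L * \<gamma> t ^ 2) *\<^sub>R grad (x t \<omega>) - xs)))"
  have S1: "1 / (2 * real T) * (\<Sum>t=1..T. \<gamma> t * (1 + L * \<gamma> t) * norm (\<epsilon> t \<omega>) ^ 2) = (\<Sum>t\<in>I. \<alpha> t * Y t \<omega>)" for \<omega>
    unfolding sum_distrib_left I_def by (intro sum.cong refl) (simp add: \<alpha>_def a_def \<tau>_def Y_def)
  have S2: "1 / real T * (\<Sum>t=1..T. \<epsilon> t \<omega> \<bullet> (x t \<omega> - (L * \<gamma> t ^ 2) *\<^sub>R grad (x t \<omega>) - xs)) = (\<Sum>t\<in>I. \<tau> * W t \<omega>)" for \<omega>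
    unfolding sum_distrib_left I_def by (intro sum.cong refl) (simp add: \<tau>_def W_def v_def)
  have S_eq: "S \<omega> = c + (\<Sum>t\<in>I. \<alpha> t * Y t \<omega>) - (\<Sum>t\<in>I. \<tau> * W t \<omega>)" for \<omega>
    unfolding S_def c_def S1 S2 ..
  have ES: "(\<integral>\<omega>. S \<omega> \<partial>P) = c + (\<Sum>t\<in>I. \<alpha> t * m t)"
    unfolding S_eq using iY iW by (simp add: Bochner_Integration.integral_sum EW m_def prob_space)
  define Z where "Z t \<omega> = \<alpha> t * (Y t \<omega> - m t) - \<tau> * W t \<omega>" for t \<omega>
  have SZ: "S \<omega> - (\<integral>\<omega>. S \<omega> \<partial>P) = (\<Sum>t\<in>I. Z t \<omega>)" for \<omega>
    by (simp only: ES) (simp add: S_eq Z_def sum_subtractf right_diff_distrib)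
  have Zexp: "Z t \<omega> * Z s \<omega> = \<alpha> t * \<alpha> s * (Y t \<omega> * Y s \<omega>) - \<alpha> t * \<alpha> s * m s * Y t \<omega>
      - \<alpha> t * \<alpha> s * m t * Y s \<omega> + \<alpha> t * \<alpha> s * m t * m s
      - \<alpha> t * \<tau> * (Y t \<omega> * W s \<omega>) + \<alpha> t * m t * \<tau> * W s \<omega>
      - \<alpha> s * \<tau> * (Y s \<omega> * W t \<omega>) + \<alpha> s * m s * \<tau> * W t \<omega>
      + \<tau> * \<tau> * (W t \<omega> * W s \<omega>)" for t s \<omega>
    unfolding Z_def by (simp add: algebra_simps)
  have iZZ: "integrable P (\<lambda>\<omega>. Z t \<omega> * Z s \<omega>)" for t s
    unfolding Zexp using iYY iY iW iYW iWW by simp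
  have EZ: "(\<integral>\<omega>. Z t \<omega> * Z s \<omega> \<partial>P) = \<alpha> t * \<alpha> s * ((\<integral>\<omega>. Y t \<omega> * Y s \<omega> \<partial>P) - m t * m s)
      - \<alpha> t * \<tau> * (\<integral>\<omega>. Y t \<omega> * W s \<omega> \<partial>P) - \<alpha> s * \<tau> * (\<integral>\<omega>. Y s \<omega> * W t \<omega> \<partial>P)
      + \<tau> * \<tau> * (\<integral>\<omega>. W t \<omega> * W s \<omega> \<partial>P)" for t s
    unfolding Zexp using iYY iY iW iYW iWW
    by (simp add: EW m_def[symmetric] prob_space algebra_simps)
  have EZ0: "(\<integral>\<omega>. Z t \<omega> * Z s \<omega> \<partial>P) = 0" if "t \<noteq> s" for t s
  proof -
    have "(\<integral>\<omega>. W t \<omega> * W s \<omega> \<partial>P) = 0"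
    proof (cases "t < s")
      case True then show ?thesis using EWW[of t s] by simp
    next
      case False then have "s < t" using that by simp
      then show ?thesis using EWW[of s t] by (simp add: mult.commute)
    qed
    then show ?thesis unfolding EZ using EYY[OF that] EYW by simp
  qed
  have YYQ: "Y t \<omega> * Y t \<omega> = Q t \<omega>" for t \<omega> by (simp add: YN QN flip: power_add)
  have EZt: "(\<integral>\<omega>. Z t \<omega> * Z t \<omega> \<partial>P) \<le> \<alpha> t ^ 2 * (\<integral>\<omega>. Q t \<omega> \<partial>P) + \<tau>^2 * (4 * R^2 * m t)" for t
  proof -
    have "(\<integral>\<omega>. Z t \<omega> * Z t \<omega> \<partial>P) = \<alpha> t ^ 2 * ((\<integral>\<omega>. Q t \<omega> \<partial>P) - m t ^ 2) + \<tau>^2 * (\<integral>\<omega>. W t \<omega> * W t \<omega> \<partial>P)"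
      unfolding EZ YYQ using EYW by (simp add: power2_eq_square)
    also have "\<dots> \<le> \<alpha> t ^ 2 * (\<integral>\<omega>. Q t \<omega> \<partial>P) + \<tau>^2 * (4 * R^2 * m t)"
    proof -
      have "\<alpha> t ^ 2 * ((\<integral>\<omega>. Q t \<omega> \<partial>P) - m t ^ 2) \<le> \<alpha> t ^ 2 * (\<integral>\<omega>. Q t \<omega> \<partial>P)"
        by (simp add: mult_left_mono)
      moreover have "\<tau>^2 * (\<integral>\<omega>. W t \<omega> * W t \<omega> \<partial>P) \<le> \<tau>^2 * (4 * R^2 * m t)"
        by (intro mult_left_mono EW2) simp
      ultimately show ?thesis by linarith
    qed
    finally show ?thesis .
  qed
  have var_eq: "(\<integral>\<omega>. (S \<omega> - (\<integral>\<omega>. S \<omega> \<partial>P))^2 \<partial>P) = (\<Sum>t\<in>I. (\<integral>\<omega>. Z t \<omega> * Z t \<omega> \<partial>P))"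
  proof -
    have "(\<integral>\<omega>. (S \<omega> - (\<integral>\<omega>. S \<omega> \<partial>P))^2 \<partial>P) = (\<integral>\<omega>. (\<Sum>t\<in>I. \<Sum>s\<in>I. Z t \<omega> * Z s \<omega>) \<partial>P)"
      unfolding SZ power2_eq_square sum_product ..
    also have "\<dots> = (\<Sum>t\<in>I. \<Sum>s\<in>I. (\<integral>\<omega>. Z t \<omega> * Z s \<omega> \<partial>P))"
      using iZZ by (simp add: Bochner_Integration.integral_sum)
    also have "\<dots> = (\<Sum>t\<in>I. (\<integral>\<omega>. Z t \<omega> * Z t \<omega> \<partial>P))"
    proof (rule sum.cong[OF refl])
      fix t assume t: "t \<in> I"
      have "(\<Sum>s\<in>I. (\<integral>\<omega>. Z t \<omega> * Z s \<omega> \<partial>P)) = (\<Sum>s\<in>I. if s = t then (\<integral>\<omega>. Z t \<omega> * Z t \<omega> \<partial>P) else 0)"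
        by (rule sum.cong[OF refl]) (simp add: EZ0)
      also have "\<dots> = (\<integral>\<omega>. Z t \<omega> * Z t \<omega> \<partial>P)" using t by (simp add: I_def)
      finally show "(\<Sum>s\<in>I. (\<integral>\<omega>. Z t \<omega> * Z s \<omega> \<partial>P)) = (\<integral>\<omega>. Z t \<omega> * Z t \<omega> \<partial>P)" .
    qed
    finally show ?thesis .
  qed
  have \<alpha>b: "\<alpha> t ^ 2 \<le> \<tau>^2 / L^2" for t
  proof -
    have "L * \<gamma> t \<le> 1" "\<gamma> t > 0" "\<gamma> t \<le> 1 / L" using step[of t] L_pos by (auto simp: field_simps)
    then have "a t \<le> (1 / L) * 2" unfolding a_def using L_pos by (intro mult_mono) auto
    moreover have "a t \<ge> 0" unfolding a_def using \<open>\<gamma> t > 0\<close> L_pos by simp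
    moreover have "\<tau> \<ge> 0" by (simp add: \<tau>_def)
    ultimately have La: "L * a t \<le> 2" "0 \<le> a t" "0 \<le> \<tau>" using L_pos by (auto simp: field_simps)
    have "L * (\<tau> * a t) = \<tau> * (L * a t)" by simp
    also have "\<dots> \<le> \<tau> * 2" using La by (intro mult_left_mono) auto
    finally have "L * (\<tau> * a t) \<le> \<tau> * 2" .
    then have "0 \<le> \<alpha> t" "\<alpha> t \<le> \<tau> / L" unfolding \<alpha>_def using L_pos La
      by (auto simp: field_simps)
    then have "\<alpha> t ^ 2 \<le> (\<tau> / L)^2" by (intro power_mono) auto
    then show ?thesis by (simp add: power_divide)
  qed
  have Q0: "(\<integral>\<omega>. Q t \<omega> \<partial>P) \<ge> 0" for t by (simp add: Q_def)
  have m0: "m t \<ge> 0" for t by (simp add: m_def Y_def)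
  have "(\<integral>\<omega>. (S \<omega> - (\<integral>\<omega>. S \<omega> \<partial>P))^2 \<partial>P) \<le> (\<Sum>t\<in>I. \<tau>^2 / L^2 * (\<integral>\<omega>. Q t \<omega> \<partial>P) + \<tau>^2 * (4 * R^2 * m t))"
    unfolding var_eq
  proof (rule sum_mono)
    fix t
    have "\<alpha> t ^ 2 * (\<integral>\<omega>. Q t \<omega> \<partial>P) \<le> \<tau>^2 / L^2 * (\<integral>\<omega>. Q t \<omega> \<partial>P)"
      by (intro mult_right_mono \<alpha>b Q0)
    then show "(\<integral>\<omega>. Z t \<omega> * Z t \<omega> \<partial>P) \<le> \<tau>^2 / L^2 * (\<integral>\<omega>. Q t \<omega> \<partial>P) + \<tau>^2 * (4 * R^2 * m t)"
      using EZt[of t] by linarith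
  qed
  also have "\<dots> = 1 / real T * (4 * M ^ 2 * (1 / real T * (\<Sum>t=1..T. (\<integral>\<omega>. norm (\<epsilon> t \<omega>) ^ 2 \<partial>P)))
              + (1 / real T * (\<Sum>t=1..T. (\<integral>\<omega>. norm (\<epsilon> t \<omega>) ^ 4 \<partial>P))) / L ^ 2)"
  proof -
    have "(\<Sum>t\<in>I. \<tau>^2 / L^2 * (\<integral>\<omega>. Q t \<omega> \<partial>P) + \<tau>^2 * (4 * R^2 * m t))
        = \<tau>^2 / L^2 * (\<Sum>t\<in>I. (\<integral>\<omega>. Q t \<omega> \<partial>P)) + \<tau>^2 * (4 * R^2 * (\<Sum>t\<in>I. m t))"
      by (simp add: sum.distrib sum_distrib_left)
    also have "\<dots> = 1 / real T * (4 * M ^ 2 * (1 / real T * (\<Sum>t=1..T. (\<integral>\<omega>. norm (\<epsilon> t \<omega>) ^ 2 \<partial>P)))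
              + (1 / real T * (\<Sum>t=1..T. (\<integral>\<omega>. norm (\<epsilon> t \<omega>) ^ 4 \<partial>P))) / L ^ 2)"
      unfolding \<tau>_def R_def I_def m_def Y_def Q_def using T_pos L_pos by (simp add: power2_eq_square field_simps)
    finally show ?thesis .
  qed
  finally show ?thesis unfolding S_def .
qed

end
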